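(* There exist universal constants $c,C>0$ such that the following holds. Let $n=2m-1$ be odd, $\mu\in\mathbb R$, and $X_1,\dots,X_n$ i.i.d. $\mathcal N(\mu,1)$. Fix $\eta\in(0,1/3)$ and let $k=\lfloor\eta n\rfloor$. Then for every $\beta\in(0,1/2)$, with probability at least $1-\beta-Ce^{-cn}$, \[S^{\mathrm{med}}_\eta(X)\le C\left(\eta+\frac{\log(1/\beta)}{n}\right).\]
   Context: For $x\in\mathbb R^n$ with order statistics $x_{(1)}\le\dots\le x_{(n)}$, $\mathrm{med}(x)=x_{(m)}$. $d_H(x,y)=\#\{i: x_i\ne y_i\}$, and $S^{\mathrm{med}}_\eta(x)=\sup_{y\in\mathbb R^n\colon d_H(x,y)\le k}|\mathrm{med}(x)-\mathrm{med}(y)|$ with $k=\lfloor\eta n\rfloor$. *)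

theory Defs
  imports "HOL-Probability.Probability"
begin

text \<open>Vectors in R^n are represented as functions nat => real, only indices i < n matter.\<close>

definition hamming :: "nat \<Rightarrow> (nat \<Rightarrow> real) \<Rightarrow> (nat \<Rightarrow> real) \<Rightarrow> nat" where
  "hamming n x y = card {i. i < n \<and> x i \<noteq> y i}"

text \<open>Median: the m-th order statistic x_(m) (1-indexed), m = (n+1) div 2.\<close>
definition med :: "nat \<Rightarrow> (nat \<Rightarrow> real) \<Rightarrow> real" where
  "med n x = sort (map x [0..<n]) ! ((n + 1) div 2 - 1)"

definition S_med :: "nat \<Rightarrow> real \<Rightarrow> (nat \<Rightarrow> real) \<Rightarrow> real" where
  "S_med n \<eta> x = (SUP y \<in> {y. hamming n x y \<le> nat \<lfloor>\<eta> * real n\<rfloor>}. \<bar>med n x - med n y\<bar>)"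

definition gauss_sample :: "nat \<Rightarrow> real \<Rightarrow> (nat \<Rightarrow> real) measure" where
  "gauss_sample n \<mu> = PiM {..<n} (\<lambda>_. density lborel (normal_density \<mu> 1))"

end

theory Submission
  imports Defs
begin

definition os :: "nat \<Rightarrow> (nat \<Rightarrow> real) \<Rightarrow> nat \<Rightarrow> real" where
  "os n x j = sort (map x [0..<n]) ! j"

definition cle :: "nat \<Rightarrow> (nat \<Rightarrow> real) \<Rightarrow> real \<Rightarrow> nat" where
  "cle n x a = card {i. i < n \<and> x i \<le> a}"

definition clt :: "nat \<Rightarrow> (nat \<Rightarrow> real) \<Rightarrow> real \<Rightarrow> nat" where
  "clt n x a = card {i. i < n \<and> x i < a}"

lemma sorted_nth_filter:
  fixes xs :: "real list"
  assumes "sorted xs" "j < length xs" "\<And>v w. P v \<Longrightarrow> w \<le> v \<Longrightarrow> P w"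
  shows "P (xs ! j) \<longleftrightarrow> j < length (filter P xs)"
  using assms
proof (induction xs arbitrary: j)
  case Nil then show ?case by simp
next
  case (Cons y ys)
  show ?case
  proof (cases "P y")
    case True
    show ?thesis
    proof (cases j)
      case 0 then show ?thesis using True by simp
    next
      case (Suc j') then show ?thesis using Cons True by auto
    qed
  next
    case False
    have "\<forall>z\<in>set ys. \<not> P z" using Cons(2) False Cons(4) by auto
    then have "filter P (y#ys) = []" using False by simp
    moreover have "\<not> P ((y#ys) ! j)"
      using Cons(2,3) False Cons(4) \<open>\<forall>z\<in>set ys. \<not> P z\<close>
      by (cases j) auto
    ultimately show ?thesis by simp
  qed
qed

lemma len_filter_sort_map:
  "length (filter P (sort (map x [0..<n]))) = card {i. i < n \<and> P (x i)}"
  by (simp add: filter_sort length_filter_conv_card, intro arg_cong[where f=card]) auto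

lemma os_le_iff:
  assumes "j < n" shows "os n x j \<le> a \<longleftrightarrow> j < cle n x a"
proof -
  have "os n x j \<le> a \<longleftrightarrow> j < length (filter (\<lambda>v. v \<le> a) (sort (map x [0..<n])))"
    unfolding os_def using assms by (intro sorted_nth_filter) auto
  then show ?thesis unfolding cle_def len_filter_sort_map .
qed

lemma os_lt_iff:
  assumes "j < n" shows "os n x j < a \<longleftrightarrow> j < clt n x a"
proof -
  have "os n x j < a \<longleftrightarrow> j < length (filter (\<lambda>v. v < a) (sort (map x [0..<n])))"
    unfolding os_def using assms by (intro sorted_nth_filter) auto
  then show ?thesis unfolding clt_def len_filter_sort_map .
qed

lemma os_mono:
  assumes "j \<le> j'" "j' < n" shows "os n x j \<le> os n x j'"
  unfolding os_def using assms by (intro sorted_nth_mono) auto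

lemma med_os: "med n x = os n x ((n + 1) div 2 - 1)"
  unfolding med_def os_def ..

lemma ham_cle:
  assumes "hamming n x y \<le> k"
  shows "cle n x a \<le> cle n y a + k" "clt n y a \<le> clt n x a + k"
proof -
  have D: "card {i. i < n \<and> x i \<noteq> y i} \<le> k" using assms unfolding hamming_def .
  have "{i. i < n \<and> x i \<le> a} \<subseteq> {i. i < n \<and> y i \<le> a} \<union> {i. i < n \<and> x i \<noteq> y i}" by auto
  then have "card {i. i < n \<and> x i \<le> a} \<le> card ({i. i < n \<and> y i \<le> a} \<union> {i. i < n \<and> x i \<noteq> y i})"
    by (intro card_mono) auto
  also have "\<dots> \<le> card {i. i < n \<and> y i \<le> a} + card {i. i < n \<and> x i \<noteq> y i}" by (rule card_Un_le)
  finally show "cle n x a \<le> cle n y a + k" unfolding cle_def using D by linarith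
  have "{i. i < n \<and> y i < a} \<subseteq> {i. i < n \<and> x i < a} \<union> {i. i < n \<and> x i \<noteq> y i}" by auto
  then have "card {i. i < n \<and> y i < a} \<le> card ({i. i < n \<and> x i < a} \<union> {i. i < n \<and> x i \<noteq> y i})"
    by (intro card_mono) auto
  also have "\<dots> \<le> card {i. i < n \<and> x i < a} + card {i. i < n \<and> x i \<noteq> y i}" by (rule card_Un_le)
  finally show "clt n y a \<le> clt n x a + k" unfolding clt_def using D by linarith
qed

lemma med_bounds:
  assumes "hamming n x y \<le> k" "k \<le> p" "p + k < n"
  shows "os n x (p - k) \<le> os n y p" "os n y p \<le> os n x (p + k)"
proof -
  let ?b = "os n x (p + k)"
  have "p + k < cle n x ?b" using os_le_iff[OF assms(3), of x ?b] by simp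
  then have "p < cle n y ?b" using ham_cle(1)[OF assms(1), of ?b] by linarith
  then show "os n y p \<le> ?b" using os_le_iff[of p n y ?b] assms by simp
  let ?a = "os n x (p - k)"
  have "\<not> p - k < clt n x ?a" using os_lt_iff[of "p-k" n x ?a] assms by simp
  then have "\<not> p < clt n y ?a" using ham_cle(2)[OF assms(1), of ?a] assms(2) by linarith
  then show "?a \<le> os n y p" using os_lt_iff[of p n y ?a] assms by simp
qed

lemma ham_upd:
  "hamming n x (\<lambda>i. if i \<in> B then c else x i) \<le> card B" if "finite B"
  unfolding hamming_def using that by (intro card_mono) auto

lemma attain_up:
  assumes "k \<le> p" "p + k < n"
  shows "\<exists>y. hamming n x y \<le> k \<and> os n x (p + k) \<le> os n y p"
proof -
  let ?b = "os n x (p + k)"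
  let ?L = "{i. i < n \<and> x i < ?b}"
  have cl: "card ?L \<le> p + k" using os_lt_iff[OF assms(2), of x ?b] unfolding clt_def by simp
  obtain B where B: "B \<subseteq> ?L" "card B = min k (card ?L)"
    using obtain_subset_with_card_n[of "min k (card ?L)" ?L] by auto
  have fB: "finite B" using B(1) by (rule finite_subset) auto
  define y where "y = (\<lambda>i. if i \<in> B then ?b else x i)"
  have "{i. i < n \<and> y i < ?b} = ?L - B" unfolding y_def using B(1) by auto
  then have "clt n y ?b = card ?L - card B" unfolding clt_def using B(1) fB
    by (simp add: card_Diff_subset)
  then have "\<not> p < clt n y ?b" using cl B(2) by auto
  then have "?b \<le> os n y p" using os_lt_iff[of p n y ?b] assms by simp
  moreover have "hamming n x y \<le> k" using ham_upd[OF fB, of n x ?b] B(2) unfolding y_def by simp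
  ultimately show ?thesis by blast
qed

lemma attain_down:
  assumes "k \<le> p" "p + k < n"
  shows "\<exists>y. hamming n x y \<le> k \<and> os n y p \<le> os n x (p - k)"
proof -
  let ?a = "os n x (p - k)"
  let ?G = "{i. i < n \<and> \<not> x i \<le> ?a}"
  let ?Le = "{i. i < n \<and> x i \<le> ?a}"
  have cl: "p - k < card ?Le" using os_le_iff[of "p-k" n x ?a] assms unfolding cle_def by simp
  have split: "card ?Le + card ?G = n"
  proof -
    have "?Le \<union> ?G = {..<n}" by auto
    moreover have "?Le \<inter> ?G = {}" by auto
    ultimately show ?thesis using card_Un_disjoint[of ?Le ?G] by simp
  qed
  obtain B where B: "B \<subseteq> ?G" "card B = min k (card ?G)"
    using obtain_subset_with_card_n[of "min k (card ?G)" ?G] by auto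
  have fB: "finite B" using B(1) by (rule finite_subset) auto
  define y where "y = (\<lambda>i. if i \<in> B then ?a else x i)"
  have "{i. i < n \<and> y i \<le> ?a} = ?Le \<union> B" unfolding y_def using B(1) by auto
  moreover have "?Le \<inter> B = {}" using B(1) by auto
  ultimately have "cle n y ?a = card ?Le + card B" unfolding cle_def using fB
    by (simp add: card_Un_disjoint)
  then have "p < cle n y ?a" using cl B(2) split assms by (auto simp: min_def)
  then have "os n y p \<le> ?a" using os_le_iff[of p n y ?a] assms by simp
  moreover have "hamming n x y \<le> k" using ham_upd[OF fB, of n x ?a] B(2) unfolding y_def by simp
  ultimately show ?thesis by blast
qed

lemma S_med_formula:
  assumes "n = 2 * m - 1" "m \<ge> 1" "nat \<lfloor>\<eta> * real n\<rfloor> < m"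
  shows "S_med n \<eta> x = max (os n x (m - 1 + nat \<lfloor>\<eta> * real n\<rfloor>) - os n x (m - 1))
                            (os n x (m - 1) - os n x (m - 1 - nat \<lfloor>\<eta> * real n\<rfloor>))"
proof -
  define k where "k = nat \<lfloor>\<eta> * real n\<rfloor>"
  define p where "p = m - 1"
  have km: "k < m" unfolding k_def using assms(3) .
  have kp: "k \<le> p" "p + k < n" using km assms(1,2) unfolding p_def by auto
  have medp: "med n z = os n z p" for z unfolding med_os p_def using assms(1,2)
  proof -
    have "n + 1 = 2 * m" using assms(1,2) by simp
    then show "os n z ((n + 1) div 2 - 1) = os n z (m - 1)" by simp
  qed
  define D where "D = max (os n x (p + k) - os n x p) (os n x p - os n x (p - k))"
  let ?Y = "{y. hamming n x y \<le> k}"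
  have bound: "\<bar>med n x - med n y\<bar> \<le> D" if "y \<in> ?Y" for y
  proof -
    have "os n x (p - k) \<le> os n y p" "os n y p \<le> os n x (p + k)"
      using med_bounds[of n x y k p] that kp by auto
    then show ?thesis unfolding medp D_def by auto
  qed
  have "x \<in> ?Y" by (simp add: hamming_def)
  then have ne: "?Y \<noteq> {}" by blast
  have bdd: "bdd_above ((\<lambda>y. \<bar>med n x - med n y\<bar>) ` ?Y)" using bound by (auto intro!: bdd_aboveI2)
  have le: "S_med n \<eta> x \<le> D" unfolding S_med_def k_def[symmetric]
    using ne bound by (intro cSUP_least) auto
  obtain y1 where y1: "hamming n x y1 \<le> k" "os n x (p + k) \<le> os n y1 p" using attain_up[OF kp] by blast
  obtain y2 where y2: "hamming n x y2 \<le> k" "os n y2 p \<le> os n x (p - k)" using attain_down[OF kp] by blast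
  have "\<bar>med n x - med n y1\<bar> \<le> S_med n \<eta> x" unfolding S_med_def k_def[symmetric]
    using y1 by (intro cSUP_upper[OF _ bdd]) auto
  moreover have "\<bar>med n x - med n y2\<bar> \<le> S_med n \<eta> x" unfolding S_med_def k_def[symmetric]
    using y2 by (intro cSUP_upper[OF _ bdd]) auto
  ultimately have "D \<le> S_med n \<eta> x" using y1 y2 unfolding medp D_def by auto
  with le have "S_med n \<eta> x = D" by linarith
  then show ?thesis unfolding D_def k_def p_def .
qed

lemma cle_sum: "real (cle n x a) = (\<Sum>i<n. indicator {..a} (x i))"
proof -
  have "(\<Sum>i<n. indicator {..a} (x i) :: real) = (\<Sum>i<n. indicator {i. x i \<le> a} i)"
    by (intro sum.cong) (auto simp: indicator_def)
  also have "\<dots> = real (\<Sum>i<n. indicator {i. x i \<le> a} i :: nat)"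
    by (simp add: of_nat_sum indicator_def)
  also have "(\<Sum>i<n. indicator {i. x i \<le> a} i :: nat) = card ({..<n} \<inter> {i. x i \<le> a})"
    by (rule sum_indicator_eq_card) simp
  finally show ?thesis unfolding cle_def by (simp add: Int_def conj_commute lessThan_def)
qed

lemma os_measurable:
  assumes "\<And>i. i < n \<Longrightarrow> (\<lambda>x. x i) \<in> borel_measurable M" "j < n"
  shows "(\<lambda>x. os n x j) \<in> borel_measurable M"
proof (subst borel_measurable_iff_le, intro allI)
  fix a
  have m: "(\<lambda>x. \<Sum>i<n. indicator {..a} (x i) :: real) \<in> borel_measurable M"
  proof (intro borel_measurable_sum)
    fix i assume "i \<in> {..<n}"
    then have "(\<lambda>x. x i) \<in> borel_measurable M" using assms(1) by auto
    then show "(\<lambda>x. indicator {..a} (x i) :: real) \<in> borel_measurable M"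
      by (rule measurable_compose) simp
  qed
  have "{w \<in> space M. os n w j \<le> a} = {w \<in> space M. real j < (\<Sum>i<n. indicator {..a} (w i))}"
    using os_le_iff[OF assms(2)] by (auto simp flip: cle_sum)
  also have "\<dots> \<in> sets M" using m by measurable
  finally show "{w \<in> space M. os n w j \<le> a} \<in> sets M" .
qed

abbreviation NN :: "real \<Rightarrow> real measure" where
  "NN \<mu> \<equiv> density lborel (normal_density \<mu> 1)"

lemma NN_prob: "prob_space (NN \<mu>)"
  by (rule prob_space_normal_density) simp

lemma NN_sets[simp, measurable_cong]: "sets (NN \<mu>) = sets borel" by simp
lemma NN_space[simp]: "space (NN \<mu>) = UNIV" by simp

lemma gauss_comp_meas: "(\<lambda>x. x i) \<in> borel_measurable (gauss_sample n \<mu>)" if "i < n"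
proof -
  have "(\<lambda>x. x i) \<in> measurable (PiM {..<n} (\<lambda>_. NN \<mu>)) (NN \<mu>)"
    by (rule measurable_component_singleton) (use that in simp)
  then show ?thesis unfolding gauss_sample_def using measurable_cong_sets[OF refl NN_sets] by blast
qed

lemma NN_singleton: "emeasure (NN \<mu>) {a} = 0"
  by (simp add: emeasure_density nn_integral_null_set)

lemma NN_psf: "product_sigma_finite (\<lambda>_. NN \<mu>)"
proof -
  interpret prob_space "NN \<mu>" by (rule NN_prob)
  show ?thesis unfolding product_sigma_finite_def by (simp add: sigma_finite_measure_axioms)
qed

lemma fubini_star:
  fixes \<phi>1 \<phi>2 :: "real \<Rightarrow> real \<Rightarrow> ennreal" and \<psi> :: "real \<Rightarrow> ennreal"
  assumes J: "finite J" "i \<notin> J" "S \<subseteq> J"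
    and [measurable]: "case_prod \<phi>1 \<in> borel_measurable (borel \<Otimes>\<^sub>M borel)"
      "case_prod \<phi>2 \<in> borel_measurable (borel \<Otimes>\<^sub>M borel)" "\<psi> \<in> borel_measurable borel"
  shows "(\<integral>\<^sup>+x. \<psi> (x i) * (\<Prod>l\<in>S. \<phi>1 (x i) (x l)) * (\<Prod>l\<in>J-S. \<phi>2 (x i) (x l)) \<partial>PiM (insert i J) (\<lambda>_. NN \<mu>))
        = (\<integral>\<^sup>+a. \<psi> a * (\<integral>\<^sup>+v. \<phi>1 a v \<partial>NN \<mu>) ^ card S * (\<integral>\<^sup>+v. \<phi>2 a v \<partial>NN \<mu>) ^ card (J - S) \<partial>NN \<mu>)"
proof -
  interpret product_sigma_finite "\<lambda>_. NN \<mu>" by (rule NN_psf)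
  have fS: "finite S" "finite (J - S)" using J finite_subset by auto
  have m1: "(\<lambda>x. \<phi>1 (x i) (x l)) \<in> borel_measurable (PiM K (\<lambda>_. NN \<mu>))" if "i \<in> K" "l \<in> K" for K l
    using that by measurable
  have m2: "(\<lambda>x. \<phi>2 (x i) (x l)) \<in> borel_measurable (PiM K (\<lambda>_. NN \<mu>))" if "i \<in> K" "l \<in> K" for K l
    using that by measurable
  have mf: "(\<lambda>x. \<psi> (x i) * (\<Prod>l\<in>S. \<phi>1 (x i) (x l)) * (\<Prod>l\<in>J-S. \<phi>2 (x i) (x l)))
      \<in> borel_measurable (PiM (insert i J) (\<lambda>_. NN \<mu>))"
    using J m1 m2 by (intro borel_measurable_times_ennreal borel_measurable_prod_ennreal) auto
  have "(\<integral>\<^sup>+x. \<psi> (x i) * (\<Prod>l\<in>S. \<phi>1 (x i) (x l)) * (\<Prod>l\<in>J-S. \<phi>2 (x i) (x l)) \<partial>PiM (insert i J) (\<lambda>_. NN \<mu>))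
     = (\<integral>\<^sup>+a. (\<integral>\<^sup>+y. \<psi> a * (\<Prod>l\<in>J. (if l \<in> S then \<phi>1 a else \<phi>2 a) (y l)) \<partial>PiM J (\<lambda>_. NN \<mu>)) \<partial>NN \<mu>)"
  proof (subst product_nn_integral_insert_rev[OF J(1,2) mf], intro nn_integral_cong)
    fix a y
    have "(\<Prod>l\<in>J. (if l \<in> S then \<phi>1 a else \<phi>2 a) (y l))
        = (\<Prod>l\<in>J-S. (if l \<in> S then \<phi>1 a else \<phi>2 a) (y l)) * (\<Prod>l\<in>S. (if l \<in> S then \<phi>1 a else \<phi>2 a) (y l))"
      by (rule prod.subset_diff[OF J(3,1)])
    also have "\<dots> = (\<Prod>l\<in>J-S. \<phi>2 a (y l)) * (\<Prod>l\<in>S. \<phi>1 a (y l))"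
      by (intro arg_cong2[where f="(*)"] prod.cong) auto
    finally have e: "(\<Prod>l\<in>J. (if l \<in> S then \<phi>1 a else \<phi>2 a) (y l)) = (\<Prod>l\<in>J-S. \<phi>2 a (y l)) * (\<Prod>l\<in>S. \<phi>1 a (y l))" .
    have "(\<Prod>l\<in>S. \<phi>1 ((y(i := a)) i) ((y(i := a)) l)) = (\<Prod>l\<in>S. \<phi>1 a (y l))"
      using J by (intro prod.cong) auto
    moreover have "(\<Prod>l\<in>J-S. \<phi>2 ((y(i := a)) i) ((y(i := a)) l)) = (\<Prod>l\<in>J-S. \<phi>2 a (y l))"
      using J by (intro prod.cong) auto
    ultimately show "\<psi> ((y(i := a)) i) * (\<Prod>l\<in>S. \<phi>1 ((y(i := a)) i) ((y(i := a)) l)) * (\<Prod>l\<in>J-S. \<phi>2 ((y(i := a)) i) ((y(i := a)) l))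
       = \<psi> a * (\<Prod>l\<in>J. (if l \<in> S then \<phi>1 a else \<phi>2 a) (y l))"
      unfolding e by (simp add: mult.commute mult.left_commute)
  qed
  also have "\<dots> = (\<integral>\<^sup>+a. \<psi> a * (\<Prod>l\<in>J. \<integral>\<^sup>+v. (if l \<in> S then \<phi>1 a else \<phi>2 a) v \<partial>NN \<mu>) \<partial>NN \<mu>)"
  proof (intro nn_integral_cong)
    fix a
    have "(\<integral>\<^sup>+y. \<psi> a * (\<Prod>l\<in>J. (if l \<in> S then \<phi>1 a else \<phi>2 a) (y l)) \<partial>PiM J (\<lambda>_. NN \<mu>))
       = \<psi> a * (\<integral>\<^sup>+y. (\<Prod>l\<in>J. (if l \<in> S then \<phi>1 a else \<phi>2 a) (y l)) \<partial>PiM J (\<lambda>_. NN \<mu>))"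
    proof (rule nn_integral_cmult)
      show "(\<lambda>y. \<Prod>l\<in>J. (if l \<in> S then \<phi>1 a else \<phi>2 a) (y l)) \<in> borel_measurable (PiM J (\<lambda>_. NN \<mu>))"
      proof (intro borel_measurable_prod_ennreal)
        fix l assume "l \<in> J"
        show "(\<lambda>y. (if l \<in> S then \<phi>1 a else \<phi>2 a) (y l)) \<in> borel_measurable (PiM J (\<lambda>_. NN \<mu>))"
        proof -
          have "(\<lambda>v. \<phi>1 a v) \<in> borel_measurable borel" "(\<lambda>v. \<phi>2 a v) \<in> borel_measurable borel"
            by measurable
          then have "(if l \<in> S then \<phi>1 a else \<phi>2 a) \<in> borel_measurable (NN \<mu>)" by simp
          then show ?thesis using \<open>l \<in> J\<close> by measurable
        qed
      qed
    qed
    also have "\<dots> = \<psi> a * (\<Prod>l\<in>J. \<integral>\<^sup>+v. (if l \<in> S then \<phi>1 a else \<phi>2 a) v \<partial>NN \<mu>)"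
      by (subst product_nn_integral_prod) (auto simp: J)
    finally show "(\<integral>\<^sup>+y. \<psi> a * (\<Prod>l\<in>J. (if l \<in> S then \<phi>1 a else \<phi>2 a) (y l)) \<partial>PiM J (\<lambda>_. NN \<mu>))
       = \<psi> a * (\<Prod>l\<in>J. \<integral>\<^sup>+v. (if l \<in> S then \<phi>1 a else \<phi>2 a) v \<partial>NN \<mu>)" .
  qed
  also have "\<dots> = (\<integral>\<^sup>+a. \<psi> a * (\<integral>\<^sup>+v. \<phi>1 a v \<partial>NN \<mu>) ^ card S * (\<integral>\<^sup>+v. \<phi>2 a v \<partial>NN \<mu>) ^ card (J - S) \<partial>NN \<mu>)"
  proof (intro nn_integral_cong)
    fix a
    have "(\<Prod>l\<in>J. \<integral>\<^sup>+v. (if l \<in> S then \<phi>1 a else \<phi>2 a) v \<partial>NN \<mu>)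
       = (\<Prod>l\<in>J-S. \<integral>\<^sup>+v. (if l \<in> S then \<phi>1 a else \<phi>2 a) v \<partial>NN \<mu>) * (\<Prod>l\<in>S. \<integral>\<^sup>+v. (if l \<in> S then \<phi>1 a else \<phi>2 a) v \<partial>NN \<mu>)"
      by (rule prod.subset_diff[OF J(3,1)])
    also have "\<dots> = (\<Prod>l\<in>J-S. \<integral>\<^sup>+v. \<phi>2 a v \<partial>NN \<mu>) * (\<Prod>l\<in>S. \<integral>\<^sup>+v. \<phi>1 a v \<partial>NN \<mu>)"
      by (intro arg_cong2[where f="(*)"] prod.cong) auto
    finally show "\<psi> a * (\<Prod>l\<in>J. \<integral>\<^sup>+v. (if l \<in> S then \<phi>1 a else \<phi>2 a) v \<partial>NN \<mu>)
      = \<psi> a * (\<integral>\<^sup>+v. \<phi>1 a v \<partial>NN \<mu>) ^ card S * (\<integral>\<^sup>+v. \<phi>2 a v \<partial>NN \<mu>) ^ card (J - S)"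
      by (simp add: mult.commute mult.left_commute)
  qed
  finally show ?thesis .
qed

lemma NN_emeq: "emeasure (NN \<mu>) A = ennreal (measure (NN \<mu>) A)"
proof -
  interpret prob_space "NN \<mu>" by (rule NN_prob)
  show ?thesis by (rule emeasure_eq_measure)
qed

lemma NN_lt_le: "measure (NN \<mu>) {..<a} = measure (NN \<mu>) {..a}"
proof -
  interpret prob_space "NN \<mu>" by (rule NN_prob)
  have "{..a} = {..<a} \<union> {a}" by auto
  then have "measure (NN \<mu>) {..a} = measure (NN \<mu>) {..<a} + measure (NN \<mu>) {a}"
    using finite_measure_Union[of "{..<a}" "{a}"] by auto
  moreover have "measure (NN \<mu>) {a} = 0" using NN_singleton[of \<mu> a] by (simp add: measure_def)
  ultimately show ?thesis by simp
qed

lemma NN_gt: "measure (NN \<mu>) {a<..} = 1 - measure (NN \<mu>) {..a}"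
proof -
  interpret prob_space "NN \<mu>" by (rule NN_prob)
  have "{a<..} = space (NN \<mu>) - {..a}" by auto
  then show ?thesis using prob_compl[of "{..a}"] by simp
qed

lemma NN_ge: "measure (NN \<mu>) {a..} = 1 - measure (NN \<mu>) {..a}"
proof -
  interpret prob_space "NN \<mu>" by (rule NN_prob)
  have "{a..} = space (NN \<mu>) - {..<a}" by auto
  then show ?thesis using prob_compl[of "{..<a}"] NN_lt_le by simp
qed

lemma NN_split: "measure (NN \<mu>) {a..} = measure (NN \<mu>) {a..b} + measure (NN \<mu>) {b<..}" if "a \<le> b"
proof -
  interpret prob_space "NN \<mu>" by (rule NN_prob)
  have "{a..} = {a..b} \<union> {b<..}" using that by auto
  moreover have "{a..b} \<inter> {b<..} = {}" by auto
  ultimately show ?thesis using finite_measure_Union[of "{a..b}" "{b<..}"] by auto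
qed

lemma NN_tail: "measure (NN \<mu>) {v. 8 \<le> \<bar>v - \<mu>\<bar>} \<le> 1/64"
proof -
  have "emeasure (NN \<mu>) {v. 8 \<le> \<bar>v - \<mu>\<bar>} = (\<integral>\<^sup>+v. indicator {v. 8 \<le> \<bar>v - \<mu>\<bar>} v \<partial>NN \<mu>)"
    by (simp add: nn_integral_indicator)
  also have "\<dots> \<le> (\<integral>\<^sup>+v. ennreal ((v - \<mu>)^2 / 64) \<partial>NN \<mu>)"
  proof (intro nn_integral_mono)
    fix v
    show "indicator {v. 8 \<le> \<bar>v - \<mu>\<bar>} v \<le> ennreal ((v - \<mu>)^2 / 64)"
    proof (cases "8 \<le> \<bar>v - \<mu>\<bar>")
      case True
      then have "64 \<le> (v - \<mu>)^2"
      proof -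
        have "8 * 8 \<le> \<bar>v - \<mu>\<bar> * \<bar>v - \<mu>\<bar>" using True by (intro mult_mono) auto
        then show ?thesis by (simp add: power2_eq_square)
      qed
      then show ?thesis using True by (simp add: indicator_def)
    qed (simp add: indicator_def)
  qed
  also have "\<dots> = (\<integral>\<^sup>+v. ennreal (normal_density \<mu> 1 v) * ennreal ((v - \<mu>)^2 / 64) \<partial>lborel)"
    by (subst nn_integral_density) auto
  also have "\<dots> = (\<integral>\<^sup>+v. ennreal (normal_density \<mu> 1 v * (v - \<mu>)^(2*1) / 64) \<partial>lborel)"
    by (intro nn_integral_cong) (simp add: ennreal_mult[symmetric])
  also have "\<dots> = ennreal (\<integral>v. normal_density \<mu> 1 v * (v - \<mu>)^(2*1) / 64 \<partial>lborel)"
  proof (intro nn_integral_eq_integral)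
    show "integrable lborel (\<lambda>v. normal_density \<mu> 1 v * (v - \<mu>)^(2*1) / 64)"
      using integrable_normal_moment[of 1 \<mu> "2*1"] by (intro integrable_divide_zero) auto
  qed auto
  also have "(\<integral>v. normal_density \<mu> 1 v * (v - \<mu>)^(2*1) / 64 \<partial>lborel) = 1/64"
    using integral_normal_moment_even[of 1 \<mu> 1] by simp
  finally show ?thesis unfolding NN_emeq by simp
qed

definition d0 :: real where "d0 = exp (-288) / sqrt (2 * pi)"

lemma d0_pos: "d0 > 0" unfolding d0_def by simp

lemma NN_cell:
  assumes "\<mu> - 8 \<le> a" "a \<le> \<mu> + 8" "0 \<le> t" "t \<le> 16"
  shows "d0 * t \<le> measure (NN \<mu>) {a..a+t}"
proof -
  have "ennreal (d0 * t) = (\<integral>\<^sup>+v. ennreal d0 * indicator {a..a+t} v \<partial>lborel)"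
    using assms d0_pos by (simp add: nn_integral_cmult ennreal_mult)
  also have "\<dots> \<le> (\<integral>\<^sup>+v. ennreal (normal_density \<mu> 1 v) * indicator {a..a+t} v \<partial>lborel)"
  proof (intro nn_integral_mono)
    fix v
    show "ennreal d0 * indicator {a..a+t} v \<le> ennreal (normal_density \<mu> 1 v) * indicator {a..a+t} v"
    proof (cases "v \<in> {a..a+t}")
      case True
      then have "\<bar>v - \<mu>\<bar> \<le> 24" using assms by auto
      then have "(v - \<mu>)^2 \<le> 24^2" using abs_le_square_iff[of "v - \<mu>" 24] by simp
      then have "exp (-288) \<le> exp (- ((v - \<mu>)^2) / 2)" by simp
      then have "d0 \<le> normal_density \<mu> 1 v" unfolding d0_def normal_density_def
        by (simp add: divide_right_mono)
      then show ?thesis using True by (simp add: indicator_def)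
    next
      case False
      then have "indicator {a..a+t} v = (0::ennreal)" by (rule indicator_simps(2))
      then show ?thesis by simp
    qed
  qed
  also have "\<dots> = emeasure (NN \<mu>) {a..a+t}" by (simp add: emeasure_density)
  finally show ?thesis unfolding NN_emeq using d0_pos assms by simp
qed

lemma prod_if_const:
  fixes c :: "'b::comm_monoid_mult"
  assumes "finite I"
  shows "(\<Prod>l\<in>I. if P l then c else 1) = c ^ card {l\<in>I. P l}"
proof -
  have "(\<Prod>l\<in>I. if P l then c else 1) = (\<Prod>l\<in>{l\<in>I. P l}. c)"
    using assms by (subst prod.inter_filter[symmetric]) auto
  then show ?thesis by simp
qed

definition tailf :: "nat \<Rightarrow> real set \<Rightarrow> nat \<Rightarrow> (nat \<Rightarrow> real) \<Rightarrow> ennreal" where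
  "tailf n A r x = ennreal ((1/64)^r) * (\<Prod>l<n. ennreal (if x l \<in> A then 64 else 1))"

lemma tailf_ge:
  assumes "r \<le> card {l. l < n \<and> x l \<in> A}"
  shows "1 \<le> tailf n A r x"
proof -
  have "(\<Prod>l<n. ennreal (if x l \<in> A then 64 else 1)) = (\<Prod>l<n. if x l \<in> A then ennreal 64 else 1)"
    by (intro prod.cong) auto
  also have "\<dots> = ennreal 64 ^ card {l\<in>{..<n}. x l \<in> A}" by (rule prod_if_const) simp
  also have "{l\<in>{..<n}. x l \<in> A} = {l. l < n \<and> x l \<in> A}" by auto
  finally have e: "tailf n A r x = ennreal ((1/64)^r) * ennreal (64 ^ card {l. l < n \<and> x l \<in> A})"
    unfolding tailf_def by (simp add: ennreal_power[symmetric])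
  have "(1::real) \<le> (1/64)^r * 64 ^ r * 64 ^ (card {l. l < n \<and> x l \<in> A} - r)"
    by (simp add: power_one_over)
  also have "\<dots> = (1/64)^r * 64 ^ card {l. l < n \<and> x l \<in> A}"
    using assms by (simp add: power_add[symmetric])
  finally have "ennreal 1 \<le> ennreal ((1/64)^r * 64 ^ card {l. l < n \<and> x l \<in> A})" by (rule ennreal_leI)
  then show ?thesis unfolding e by (simp add: ennreal_mult)
qed

lemma tailf_meas:
  assumes [measurable]: "A \<in> sets borel"
  shows "tailf n A r \<in> borel_measurable (gauss_sample n \<mu>)"
  unfolding tailf_def gauss_sample_def using assms by measurable

lemma tailf_int:
  assumes [measurable]: "A \<in> sets borel" and "measure (NN \<mu>) A \<le> 1/64" "n \<le> 6 * r"
  shows "(\<integral>\<^sup>+x. tailf n A r x \<partial>gauss_sample n \<mu>) \<le> ennreal ((127/128)^n)"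
proof -
  interpret product_sigma_finite "\<lambda>_. NN \<mu>" by (rule NN_psf)
  have g: "(\<integral>\<^sup>+v. ennreal (if v \<in> A then 64 else 1) \<partial>NN \<mu>) \<le> ennreal (127/64)"
  proof -
    have "(\<integral>\<^sup>+v. ennreal (if v \<in> A then 64 else 1) \<partial>NN \<mu>) = (\<integral>\<^sup>+v. 1 + 63 * indicator A v \<partial>NN \<mu>)"
      by (intro nn_integral_cong) (auto simp: indicator_def)
    also have "\<dots> = (\<integral>\<^sup>+v. 1 \<partial>NN \<mu>) + (\<integral>\<^sup>+v. 63 * indicator A v \<partial>NN \<mu>)"
      using assms(1) by (intro nn_integral_add) auto
    also have "\<dots> = 1 + 63 * emeasure (NN \<mu>) A"
  proof -
    have "emeasure (NN \<mu>) UNIV = 1" using prob_space.emeasure_space_1[OF NN_prob[of \<mu>]] by simp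
    then show ?thesis using assms(1) by (simp add: nn_integral_cmult_indicator)
  qed
    also have "\<dots> = ennreal (1 + 63 * measure (NN \<mu>) A)"
      unfolding NN_emeq by (simp add: ennreal_plus ennreal_mult)
    also have "\<dots> \<le> ennreal (127/64)" using assms(2) by (intro ennreal_leI) simp
    finally show ?thesis .
  qed
  have "(\<integral>\<^sup>+x. tailf n A r x \<partial>gauss_sample n \<mu>)
      = ennreal ((1/64)^r) * (\<integral>\<^sup>+x. (\<Prod>l<n. ennreal (if x l \<in> A then 64 else 1)) \<partial>gauss_sample n \<mu>)"
    unfolding tailf_def gauss_sample_def using assms(1) by (intro nn_integral_cmult) measurable
  also have "(\<integral>\<^sup>+x. (\<Prod>l<n. ennreal (if x l \<in> A then 64 else 1)) \<partial>gauss_sample n \<mu>)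
      = (\<Prod>l<n. \<integral>\<^sup>+v. ennreal (if v \<in> A then 64 else 1) \<partial>NN \<mu>)"
    unfolding gauss_sample_def using assms(1) by (intro product_nn_integral_prod) auto
  also have "\<dots> \<le> (\<Prod>l<n. ennreal (127/64))" using g by (intro prod_mono_ennreal) auto
  also have "\<dots> = ennreal ((127/64)^n)" by (simp add: ennreal_power)
  finally have "(\<integral>\<^sup>+x. tailf n A r x \<partial>gauss_sample n \<mu>) \<le> ennreal ((1/64)^r * (127/64)^n)"
    by (simp add: ennreal_mult mult_left_mono)
  also have "(1/64::real)^r * (127/64)^n \<le> (127/128)^n"
  proof -
    have "(1/64::real)^r = (1/2)^(6*r)" by (simp add: power_mult power_one_over)
    also have "\<dots> \<le> (1/2)^n" using assms(3) by (intro power_decreasing) auto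
    finally have "(1/64::real)^r * (127/64)^n \<le> (1/2)^n * (127/64)^n" by (intro mult_right_mono) auto
    also have "\<dots> = (127/128)^n" by (simp add: power_mult_distrib[symmetric])
    finally show ?thesis .
  qed
  finally show ?thesis by (simp add: ennreal_leI)
qed

definition goodp :: "nat \<Rightarrow> (nat \<Rightarrow> real) \<Rightarrow> nat \<Rightarrow> nat set \<Rightarrow> bool" where
  "goodp n x i S \<longleftrightarrow> i < n \<and> S \<subseteq> {..<n} - {i} \<and> (\<forall>l\<in>S. x l < x i) \<and> (\<forall>l\<in>({..<n} - {i}) - S. x i < x l)"

lemma goodp_lt_False:
  assumes g: "goodp n x i S" "goodp n x i' S'" and c: "card S = card S'" and lt: "x i' < x i"
  shows False
proof -
  have ii: "i \<noteq> i'" using lt by auto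
  have "i' \<in> S"
  proof (rule ccontr)
    assume "i' \<notin> S"
    then have "i' \<in> ({..<n} - {i}) - S" using g ii unfolding goodp_def by auto
    then have "x i < x i'" using g(1) unfolding goodp_def by blast
    then show False using lt by simp
  qed
  have sub: "insert i' S' \<subseteq> S"
  proof
    fix l assume l: "l \<in> insert i' S'"
    show "l \<in> S"
    proof (cases "l = i'")
      case True then show ?thesis using \<open>i' \<in> S\<close> by simp
    next
      case False
      then have "l \<in> S'" using l by auto
      then have xl: "x l < x i'" "l < n" "l \<noteq> i'" using g(2) unfolding goodp_def by auto
      then have "l \<noteq> i" using lt by auto
      show "l \<in> S"
      proof (rule ccontr)
        assume "l \<notin> S"
        then have "x i < x l" using g(1) xl \<open>l \<noteq> i\<close> unfolding goodp_def by auto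
        then show False using xl lt by auto
      qed
    qed
  qed
  have "S \<subseteq> {..<n}" using g(1) unfolding goodp_def by auto
  then have fS: "finite S" using finite_subset by blast
  have "i' \<notin> S'" using g(2) unfolding goodp_def by auto
  then have "card (insert i' S') = card S' + 1"
    using finite_subset[OF sub fS] by simp
  moreover have "card (insert i' S') \<le> card S" using card_mono[OF fS sub] .
  ultimately show False using c by simp
qed

lemma goodp_unique:
  assumes g: "goodp n x i S" "goodp n x i' S'" and c: "card S = card S'"
  shows "i = i' \<and> S = S'"
proof (cases "i = i'")
  case True
  have eq: "T = {l \<in> {..<n} - {i}. x l < x i}" if gT: "goodp n x i T" for T
  proof (intro set_eqI iffI)
    fix l assume "l \<in> T" then show "l \<in> {l \<in> {..<n} - {i}. x l < x i}" using gT unfolding goodp_def by blast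
  next
    fix l assume l: "l \<in> {l \<in> {..<n} - {i}. x l < x i}"
    show "l \<in> T"
    proof (rule ccontr)
      assume "l \<notin> T"
      then have "x i < x l" using gT l unfolding goodp_def by blast
      then show False using l by simp
    qed
  qed
  have "S = {l \<in> {..<n} - {i}. x l < x i}" using eq g(1) by blast
  moreover have "S' = {l \<in> {..<n} - {i}. x l < x i}" using eq g(2) True by blast
  ultimately show ?thesis using True by simp
next
  case False
  have "i' \<in> {..<n} - {i}" using g False unfolding goodp_def by auto
  then have "x i' < x i \<or> x i < x i'" using g(1) unfolding goodp_def by auto
  then show ?thesis using goodp_lt_False[OF g c] goodp_lt_False[OF g(2,1) c[symmetric]] by auto
qed

lemma find_pivot:
  assumes jn: "j + 2 * k < n" and up: "os n x j + t < os n x (j + 2 * k)" and t0: "0 \<le> t"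
  shows "\<exists>i S. i < n \<and> S \<subseteq> {..<n} - {i} \<and> card S = j \<and> x i = os n x j
     \<and> (\<forall>l\<in>S. x l \<le> x i) \<and> (\<forall>l\<in>({..<n} - {i}) - S. x i \<le> x l)
     \<and> card {l \<in> ({..<n} - {i}) - S. x l \<le> x i + t} \<le> 2 * k"
proof -
  define a where "a = os n x j"
  have j: "j < n" using jn by simp
  define L where "L = {l. l < n \<and> x l < a}"
  define E where "E = {l. l < n \<and> x l = a}"
  have fL: "finite L" and fE: "finite E" unfolding L_def E_def by auto
  have cL: "card L \<le> j" using os_lt_iff[OF j, of x a] unfolding a_def clt_def L_def by simp
  have cLE: "j < card {l. l < n \<and> x l \<le> a}" using os_le_iff[OF j, of x a] unfolding a_def cle_def by simp
  have LE: "{l. l < n \<and> x l \<le> a} = L \<union> E" unfolding L_def E_def by auto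
  have dLE: "L \<inter> E = {}" unfolding L_def E_def by auto
  have cE: "card L + card E > j" using cLE unfolding LE using card_Un_disjoint[OF fL fE dLE] by simp
  then have "E \<noteq> {}" using cL by auto
  then obtain i where iE: "i \<in> E" by auto
  have "card (E - {i}) = card E - 1" using iE fE by simp
  then have "j - card L \<le> card (E - {i})" using cE cL by linarith
  then obtain W where W: "W \<subseteq> E - {i}" "card W = j - card L"
    using obtain_subset_with_card_n by metis
  define S where "S = L \<union> W"
  have fW: "finite W" using W(1) fE finite_subset by blast
  have iL: "i \<notin> L" using iE unfolding L_def E_def by auto
  have LW: "L \<inter> W = {}" using W(1) dLE by auto
  have cS: "card S = j" unfolding S_def using card_Un_disjoint[OF fL fW LW] W(2) cL by simp
  have i: "i < n" "x i = a" using iE unfolding E_def by auto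
  have Ssub: "S \<subseteq> {..<n} - {i}" unfolding S_def using W(1) iL unfolding L_def E_def by auto
  have S1: "\<forall>l\<in>S. x l \<le> x i" unfolding S_def using W(1) i unfolding L_def E_def by auto
  have U1: "\<forall>l\<in>({..<n} - {i}) - S. x i \<le> x l" unfolding S_def L_def using i by auto
  have cnt: "card {l \<in> ({..<n} - {i}) - S. x l \<le> x i + t} \<le> 2 * k"
  proof -
    have cle_up: "card {l. l < n \<and> x l \<le> a + t} \<le> j + 2 * k"
      using os_le_iff[OF jn, of x "a + t"] up unfolding a_def cle_def by simp
    have sub2: "insert i S \<subseteq> {l. l < n \<and> x l \<le> a + t}"
    proof -
      have "a + t \<ge> a" using t0 by simp
      then show ?thesis using S1 i Ssub by auto
    qed
    have disj: "{l \<in> ({..<n} - {i}) - S. x l \<le> x i + t} \<inter> insert i S = {}" by auto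
    have un: "{l \<in> ({..<n} - {i}) - S. x l \<le> x i + t} \<union> insert i S \<subseteq> {l. l < n \<and> x l \<le> a + t}"
      using sub2 i by auto
    have fS: "finite S" using Ssub finite_subset by blast
    have "card ({l \<in> ({..<n} - {i}) - S. x l \<le> x i + t} \<union> insert i S)
        = card {l \<in> ({..<n} - {i}) - S. x l \<le> x i + t} + card (insert i S)"
      by (rule card_Un_disjoint[OF _ _ disj]) (use fS in auto)
    moreover have "i \<notin> S" using Ssub by auto
    then have "card (insert i S) = j + 1" using fS cS by simp
    moreover have "card ({l \<in> ({..<n} - {i}) - S. x l \<le> x i + t} \<union> insert i S) \<le> j + 2 * k"
    proof -
      have "finite {l. l < n \<and> x l \<le> a + t}" by simp
      then show ?thesis using card_mono[OF _ un] cle_up by linarith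
    qed
    ultimately show ?thesis by linarith
  qed
  show ?thesis using i Ssub cS S1 U1 cnt unfolding a_def by blast
qed

definition ph1 :: "real \<Rightarrow> real \<Rightarrow> ennreal" where
  "ph1 a v = ennreal (if v \<le> a then 1 else 0)"
definition ph2 :: "real \<Rightarrow> real \<Rightarrow> real \<Rightarrow> ennreal" where
  "ph2 t a v = ennreal (if a \<le> v \<and> v \<le> a + t then 1/2 else if a + t < v then 1 else 0)"
definition psi :: "real \<Rightarrow> nat \<Rightarrow> real \<Rightarrow> ennreal" where
  "psi \<mu> k a = ennreal (if \<mu> - 8 \<le> a \<and> a \<le> \<mu> + 8 then 4^k else 0)"
definition ga1 :: "real \<Rightarrow> real \<Rightarrow> ennreal" where
  "ga1 a v = ennreal (if v < a then 1 else 0)"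
definition ga2 :: "real \<Rightarrow> real \<Rightarrow> ennreal" where
  "ga2 a v = ennreal (if a < v then 1 else 0)"

lemma ph1_m[measurable]: "case_prod ph1 \<in> borel_measurable (borel \<Otimes>\<^sub>M borel)"
  unfolding ph1_def case_prod_beta
  by (intro measurable_compose[OF _ measurable_ennreal]) measurable
lemma ph2_m[measurable]: "case_prod (ph2 t) \<in> borel_measurable (borel \<Otimes>\<^sub>M borel)"
  unfolding ph2_def case_prod_beta
  by (intro measurable_compose[OF _ measurable_ennreal]) measurable
lemma psi_m[measurable]: "psi \<mu> k \<in> borel_measurable borel"
  unfolding psi_def
  by (intro measurable_compose[OF _ measurable_ennreal]) measurable
lemma ga1_m[measurable]: "case_prod ga1 \<in> borel_measurable (borel \<Otimes>\<^sub>M borel)"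
  unfolding ga1_def case_prod_beta
  by (intro measurable_compose[OF _ measurable_ennreal]) measurable
lemma ga2_m[measurable]: "case_prod ga2 \<in> borel_measurable (borel \<Otimes>\<^sub>M borel)"
  unfolding ga2_def case_prod_beta
  by (intro measurable_compose[OF _ measurable_ennreal]) measurable

lemma int_ph1: "(\<integral>\<^sup>+v. ph1 a v \<partial>NN \<mu>) = ennreal (measure (NN \<mu>) {..a})"
proof -
  have "(\<integral>\<^sup>+v. ph1 a v \<partial>NN \<mu>) = (\<integral>\<^sup>+v. indicator {..a} v \<partial>NN \<mu>)"
      proof (intro nn_integral_cong)
    fix v show "ph1 a v = indicator {..a} v" by (cases "v \<le> a") (simp_all add: ph1_def)
  qed
  also have "\<dots> = emeasure (NN \<mu>) {..a}" by (simp add: nn_integral_indicator)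
  finally show ?thesis unfolding NN_emeq .
qed

lemma int_ga1: "(\<integral>\<^sup>+v. ga1 a v \<partial>NN \<mu>) = ennreal (measure (NN \<mu>) {..<a})"
proof -
  have "(\<integral>\<^sup>+v. ga1 a v \<partial>NN \<mu>) = (\<integral>\<^sup>+v. indicator {..<a} v \<partial>NN \<mu>)"
      proof (intro nn_integral_cong)
    fix v show "ga1 a v = indicator {..<a} v" by (cases "v < a") (simp_all add: ga1_def)
  qed
  also have "\<dots> = emeasure (NN \<mu>) {..<a}" by (simp add: nn_integral_indicator)
  finally show ?thesis unfolding NN_emeq .
qed

lemma int_ga2: "(\<integral>\<^sup>+v. ga2 a v \<partial>NN \<mu>) = ennreal (measure (NN \<mu>) {a<..})"
proof -
  have "(\<integral>\<^sup>+v. ga2 a v \<partial>NN \<mu>) = (\<integral>\<^sup>+v. indicator {a<..} v \<partial>NN \<mu>)"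
      proof (intro nn_integral_cong)
    fix v show "ga2 a v = indicator {a<..} v" by (cases "a < v") (simp_all add: ga2_def)
  qed
  also have "\<dots> = emeasure (NN \<mu>) {a<..}" by (simp add: nn_integral_indicator)
  finally show ?thesis unfolding NN_emeq .
qed

lemma int_ph2:
  assumes "0 \<le> t"
  shows "(\<integral>\<^sup>+v. ph2 t a v \<partial>NN \<mu>) = ennreal (measure (NN \<mu>) {a..a+t} / 2 + measure (NN \<mu>) {a+t<..})"
proof -
  have "(\<integral>\<^sup>+v. ph2 t a v \<partial>NN \<mu>) = (\<integral>\<^sup>+v. ennreal (1/2) * indicator {a..a+t} v + indicator {a+t<..} v \<partial>NN \<mu>)"
      proof (intro nn_integral_cong)
    fix v show "ph2 t a v = ennreal (1/2) * indicator {a..a+t} v + indicator {a+t<..} v"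
      by (cases "a \<le> v \<and> v \<le> a + t"; cases "a + t < v") (simp_all add: ph2_def)
  qed
  also have "\<dots> = (\<integral>\<^sup>+v. ennreal (1/2) * indicator {a..a+t} v \<partial>NN \<mu>) + (\<integral>\<^sup>+v. indicator {a+t<..} v \<partial>NN \<mu>)"
    by (intro nn_integral_add) auto
  also have "\<dots> = ennreal (1/2) * emeasure (NN \<mu>) {a..a+t} + emeasure (NN \<mu>) {a+t<..}"
    by (simp add: nn_integral_cmult_indicator nn_integral_indicator)
  also have "\<dots> = ennreal (measure (NN \<mu>) {a..a+t} / 2 + measure (NN \<mu>) {a+t<..})"
  proof -
    have "ennreal (measure (NN \<mu>) {a..a+t} / 2 + measure (NN \<mu>) {a+t<..})
        = ennreal ((1/2) * measure (NN \<mu>) {a..a+t}) + ennreal (measure (NN \<mu>) {a+t<..})"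
      by (subst ennreal_plus[symmetric]) auto
    also have "ennreal ((1/2) * measure (NN \<mu>) {a..a+t}) = ennreal (1/2) * ennreal (measure (NN \<mu>) {a..a+t})"
      by (rule ennreal_mult) auto
    finally show ?thesis unfolding NN_emeq by simp
  qed
  finally show ?thesis .
qed

lemma key_real:
  assumes "\<mu> - 8 \<le> a" "a \<le> \<mu> + 8" "0 \<le> t" "t \<le> 16"
  shows "measure (NN \<mu>) {a..a+t} / 2 + measure (NN \<mu>) {a+t<..} \<le> measure (NN \<mu>) {a<..} * exp (- (d0 * t / 2))"
proof -
  define q where "q = measure (NN \<mu>) {a..a+t}"
  define r where "r = measure (NN \<mu>) {a+t<..}"
  define w where "w = measure (NN \<mu>) {a<..}"
  have w: "w = q + r" unfolding w_def q_def r_def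
    using NN_gt[of \<mu> a] NN_ge[of \<mu> a] NN_split[of a "a+t" \<mu>] assms by simp
  have w1: "w \<le> 1" "0 \<le> w" unfolding w_def using prob_space.prob_le_1[OF NN_prob] by auto
  have q0: "0 \<le> q" "d0 * t \<le> q" unfolding q_def using NN_cell[OF assms] by auto
  have "q / 2 + r = w - q / 2" using w by simp
  also have "\<dots> \<le> w * (1 - q / 2)" using w1 q0 by (simp add: algebra_simps mult_left_le)
  also have "\<dots> \<le> w * exp (- (q / 2))" using w1 by (intro mult_left_mono) (use exp_ge_add_one_self[of "- (q/2)"] in auto)
  also have "\<dots> \<le> w * exp (- (d0 * t / 2))" using w1 q0 by (intro mult_left_mono) auto
  finally show ?thesis unfolding q_def r_def w_def .
qed

definition pairs :: "nat \<Rightarrow> nat \<Rightarrow> (nat \<times> nat set) set" where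
  "pairs n j = {(i, S). i < n \<and> S \<subseteq> {..<n} - {i} \<and> card S = j}"

lemma finite_pairs: "finite (pairs n j)"
proof -
  have "pairs n j \<subseteq> {..<n} \<times> Pow {..<n}" unfolding pairs_def by auto
  then show ?thesis by (rule finite_subset) auto
qed

definition hb :: "nat \<Rightarrow> real \<Rightarrow> nat \<Rightarrow> real \<Rightarrow> nat \<times> nat set \<Rightarrow> (nat \<Rightarrow> real) \<Rightarrow> ennreal" where
  "hb n \<mu> k t p x = psi \<mu> k (x (fst p)) * (\<Prod>l\<in>snd p. ph1 (x (fst p)) (x l))
      * (\<Prod>l\<in>({..<n} - {fst p}) - snd p. ph2 t (x (fst p)) (x l))"

definition hg :: "nat \<Rightarrow> ennreal \<Rightarrow> nat \<times> nat set \<Rightarrow> (nat \<Rightarrow> real) \<Rightarrow> ennreal" where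
  "hg n c p x = c * (\<Prod>l\<in>snd p. ga1 (x (fst p)) (x l))
      * (\<Prod>l\<in>({..<n} - {fst p}) - snd p. ga2 (x (fst p)) (x l))"

lemma gauss_insert: "i < n \<Longrightarrow> gauss_sample n \<mu> = PiM (insert i ({..<n} - {i})) (\<lambda>_. NN \<mu>)"
  unfolding gauss_sample_def by (simp add: insert_absorb)

lemma hb_meas: "p \<in> pairs n j \<Longrightarrow> hb n \<mu> k t p \<in> borel_measurable (gauss_sample n \<mu>)"
  unfolding hb_def pairs_def gauss_sample_def
  by (intro borel_measurable_times_ennreal borel_measurable_prod_ennreal) (auto; measurable)+

lemma hg_meas: "p \<in> pairs n j \<Longrightarrow> hg n c p \<in> borel_measurable (gauss_sample n \<mu>)"
  unfolding hg_def pairs_def gauss_sample_def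
  by (intro borel_measurable_times_ennreal borel_measurable_prod_ennreal) (auto; measurable)+


lemma card_rest: assumes "i < n" "S \<subseteq> {..<n} - {i}" "card S = j"
  shows "card (({..<n} - {i}) - S) = n - 1 - j"
proof -
  have "card ({..<n} - {i}) = n - 1" using assms(1) by simp
  then show ?thesis using assms(2,3) by (simp add: card_Diff_subset finite_subset)
qed

lemma hb_int:
  assumes p: "p \<in> pairs n j" and t: "0 \<le> t" "t \<le> 16"
  shows "(\<integral>\<^sup>+x. hb n \<mu> k t p x \<partial>gauss_sample n \<mu>)
     \<le> (\<integral>\<^sup>+x. hg n (ennreal (4^k * exp (- (d0 * t / 2)) ^ (n - 1 - j))) p x \<partial>gauss_sample n \<mu>)"
proof -
  obtain i S where pS: "p = (i, S)" "i < n" "S \<subseteq> {..<n} - {i}" "card S = j"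
    using p unfolding pairs_def by auto
  define J where "J = {..<n} - {i}"
  define R where "R = n - 1 - j"
  define eps where "eps = 4^k * exp (- (d0 * t / 2)) ^ R"
  have fJ: "finite J" "i \<notin> J" "S \<subseteq> J" using pS unfolding J_def by auto
  have cR: "card (J - S) = R" unfolding J_def R_def using card_rest[OF pS(2-4)] .
  have G: "gauss_sample n \<mu> = PiM (insert i J) (\<lambda>_. NN \<mu>)" unfolding J_def using gauss_insert[OF pS(2)] .
  have "(\<integral>\<^sup>+x. hb n \<mu> k t p x \<partial>gauss_sample n \<mu>)
      = (\<integral>\<^sup>+a. psi \<mu> k a * (\<integral>\<^sup>+v. ph1 a v \<partial>NN \<mu>) ^ card S * (\<integral>\<^sup>+v. ph2 t a v \<partial>NN \<mu>) ^ card (J - S) \<partial>NN \<mu>)"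
    unfolding G hb_def pS(1) fst_conv snd_conv J_def[symmetric]
    by (rule fubini_star[OF fJ]) measurable
  also have "\<dots> \<le> (\<integral>\<^sup>+a. (\<lambda>_. ennreal eps) a * (\<integral>\<^sup>+v. ga1 a v \<partial>NN \<mu>) ^ card S * (\<integral>\<^sup>+v. ga2 a v \<partial>NN \<mu>) ^ card (J - S) \<partial>NN \<mu>)"
  proof (intro nn_integral_mono)
    fix a
    define F where "F = measure (NN \<mu>) {..a}"
    define h where "h = measure (NN \<mu>) {a..a+t} / 2 + measure (NN \<mu>) {a+t<..}"
    define w where "w = measure (NN \<mu>) {a<..}"
    have F0: "0 \<le> F" unfolding F_def by simp
    have h0: "0 \<le> h" unfolding h_def by simp
    have w0: "0 \<le> w" unfolding w_def by simp
    have e1: "(\<integral>\<^sup>+v. ph1 a v \<partial>NN \<mu>) = ennreal F" unfolding F_def by (rule int_ph1)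
    have e2: "(\<integral>\<^sup>+v. ph2 t a v \<partial>NN \<mu>) = ennreal h" unfolding h_def by (rule int_ph2[OF t(1)])
    have e3: "(\<integral>\<^sup>+v. ga1 a v \<partial>NN \<mu>) = ennreal F" unfolding F_def using int_ga1 NN_lt_le by simp
    have e4: "(\<integral>\<^sup>+v. ga2 a v \<partial>NN \<mu>) = ennreal w" unfolding w_def by (rule int_ga2)
    show "psi \<mu> k a * (\<integral>\<^sup>+v. ph1 a v \<partial>NN \<mu>) ^ card S * (\<integral>\<^sup>+v. ph2 t a v \<partial>NN \<mu>) ^ card (J - S)
        \<le> (\<lambda>_. ennreal eps) a * (\<integral>\<^sup>+v. ga1 a v \<partial>NN \<mu>) ^ card S * (\<integral>\<^sup>+v. ga2 a v \<partial>NN \<mu>) ^ card (J - S)"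
    proof (cases "\<mu> - 8 \<le> a \<and> a \<le> \<mu> + 8")
      case False
      then have "psi \<mu> k a = 0" unfolding psi_def by simp
      then show ?thesis by simp
    next
      case True
      have ps: "psi \<mu> k a = ennreal (4^k)" unfolding psi_def using True by simp
      have hw: "h \<le> w * exp (- (d0 * t / 2))" unfolding h_def w_def using key_real True t by auto
      have "h ^ R \<le> (w * exp (- (d0 * t / 2))) ^ R" using hw h0 by (intro power_mono) auto
      then have "4^k * F ^ card S * h ^ R \<le> 4^k * F ^ card S * (w * exp (- (d0 * t / 2))) ^ R"
        using F0 by (intro mult_left_mono) auto
      also have "\<dots> = eps * F ^ card S * w ^ R" unfolding eps_def by (simp add: power_mult_distrib)
      finally have ineq: "4^k * F ^ card S * h ^ R \<le> eps * F ^ card S * w ^ R" .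
      have "psi \<mu> k a * (\<integral>\<^sup>+v. ph1 a v \<partial>NN \<mu>) ^ card S * (\<integral>\<^sup>+v. ph2 t a v \<partial>NN \<mu>) ^ card (J - S)
          = ennreal (4^k * F ^ card S * h ^ R)"
        unfolding ps e1 e2 cR using F0 h0 by (simp add: ennreal_power ennreal_mult)
      also have "\<dots> \<le> ennreal (eps * F ^ card S * w ^ R)" using ineq by (rule ennreal_leI)
      also have "\<dots> = (\<lambda>_. ennreal eps) a * (\<integral>\<^sup>+v. ga1 a v \<partial>NN \<mu>) ^ card S * (\<integral>\<^sup>+v. ga2 a v \<partial>NN \<mu>) ^ card (J - S)"
        unfolding e3 e4 cR eps_def using F0 w0 by (simp add: ennreal_power ennreal_mult)
      finally show ?thesis .
    qed
  qed
  also have "\<dots> = (\<integral>\<^sup>+x. hg n (ennreal eps) p x \<partial>gauss_sample n \<mu>)"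
    unfolding G hg_def pS(1) fst_conv snd_conv J_def[symmetric]
    by (rule fubini_star[OF fJ, symmetric]) measurable
  finally show ?thesis unfolding eps_def R_def .
qed


lemma prod_01:
  assumes "finite S"
  shows "(\<Prod>l\<in>S. (if P l then 1 else 0 :: real)) = (if \<forall>l\<in>S. P l then 1 else 0)"
proof (cases "\<forall>l\<in>S. P l")
  case True then show ?thesis by simp
next
  case False
  then obtain l where "l \<in> S" "\<not> P l" by auto
  then show ?thesis using assms False by (simp add: prod_zero_iff) 
qed

lemma hb_ge1:
  assumes jn: "j + 2 * k < n" and t0: "0 \<le> t"
    and rng: "\<mu> - 8 \<le> os n x j" "os n x j \<le> \<mu> + 8" and up: "os n x j + t < os n x (j + 2 * k)"
  shows "1 \<le> (\<Sum>p\<in>pairs n j. hb n \<mu> k t p x)"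
proof -
  obtain i S where iS: "i < n" "S \<subseteq> {..<n} - {i}" "card S = j" "x i = os n x j"
     "\<forall>l\<in>S. x l \<le> x i" "\<forall>l\<in>({..<n} - {i}) - S. x i \<le> x l"
     "card {l \<in> ({..<n} - {i}) - S. x l \<le> x i + t} \<le> 2 * k"
    using find_pivot[OF jn up t0] by blast
  define U where "U = ({..<n} - {i}) - S"
  have fU: "finite U" unfolding U_def by simp
  have p: "(i, S) \<in> pairs n j" unfolding pairs_def using iS by auto
  have e1: "psi \<mu> k (x i) = ennreal (4^k)" unfolding psi_def using rng iS(4) by simp
  have e2: "(\<Prod>l\<in>S. ph1 (x i) (x l)) = 1"
    using iS(5) by (intro prod.neutral) (simp add: ph1_def)
  have "(\<Prod>l\<in>U. ph2 t (x i) (x l)) = (\<Prod>l\<in>U. ennreal (if x l \<le> x i + t then 1/2 else 1))"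
  proof (intro prod.cong refl)
    fix l assume "l \<in> U"
    then have "x i \<le> x l" using iS(6) unfolding U_def by auto
    then show "ph2 t (x i) (x l) = ennreal (if x l \<le> x i + t then 1/2 else 1)"
      unfolding ph2_def by auto
  qed
  also have "\<dots> = ennreal (\<Prod>l\<in>U. (if x l \<le> x i + t then 1/2 else 1))"
    by (rule prod_ennreal) auto
  also have "(\<Prod>l\<in>U. (if x l \<le> x i + t then 1/2 else 1 :: real)) = (1/2) ^ card {l\<in>U. x l \<le> x i + t}"
    by (rule prod_if_const[OF fU])
  finally have e3: "(\<Prod>l\<in>U. ph2 t (x i) (x l)) = ennreal ((1/2) ^ card {l\<in>U. x l \<le> x i + t})" .
  have c: "card {l\<in>U. x l \<le> x i + t} \<le> 2 * k" using iS(7) unfolding U_def .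
  have "(1::real) = 4^k * (1/2)^(2*k)" by (simp add: power_mult power_one_over)
  also have "\<dots> \<le> 4^k * (1/2) ^ card {l\<in>U. x l \<le> x i + t}"
    using c by (intro mult_left_mono power_decreasing) auto
  finally have r: "1 \<le> 4^k * (1/2 :: real) ^ card {l\<in>U. x l \<le> x i + t}" .
  have "hb n \<mu> k t (i, S) x = ennreal (4^k * (1/2) ^ card {l\<in>U. x l \<le> x i + t})"
    unfolding hb_def fst_conv snd_conv U_def[symmetric] e1 e2 e3 by (simp add: ennreal_mult)
  then have "1 \<le> hb n \<mu> k t (i, S) x" using r by (simp add: ennreal_leI ennreal_1[symmetric] del: ennreal_1)
  also have "\<dots> \<le> (\<Sum>p\<in>pairs n j. hb n \<mu> k t p x)"
    by (rule member_le_sum[OF p _ finite_pairs]) simp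
  finally show ?thesis .
qed

lemma hg_val:
  assumes "p \<in> pairs n j"
  shows "hg n 1 p x = (if goodp n x (fst p) (snd p) then 1 else 0)"
proof -
  obtain i S where iS: "p = (i, S)" "i < n" "S \<subseteq> {..<n} - {i}" "card S = j"
    using assms unfolding pairs_def by auto
  define U where "U = ({..<n} - {i}) - S"
  have fS: "finite S" using iS(3) finite_subset by blast
  have fU: "finite U" unfolding U_def by simp
  have a: "(\<Prod>l\<in>S. ga1 (x i) (x l)) = ennreal (if \<forall>l\<in>S. x l < x i then 1 else 0)"
    unfolding ga1_def by (simp add: prod_ennreal prod_01[OF fS])
  have b: "(\<Prod>l\<in>U. ga2 (x i) (x l)) = ennreal (if \<forall>l\<in>U. x i < x l then 1 else 0)"
    unfolding ga2_def by (simp add: prod_ennreal prod_01[OF fU])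
  show ?thesis unfolding hg_def iS(1) fst_conv snd_conv U_def[symmetric] a b goodp_def
    using iS by auto
qed

lemma sum_hg_le1: "(\<Sum>p\<in>pairs n j. hg n 1 p x) \<le> 1"
proof (cases "\<exists>p\<in>pairs n j. goodp n x (fst p) (snd p)")
  case False
  then have "(\<Sum>p\<in>pairs n j. hg n 1 p x) = 0" by (simp add: hg_val)
  then show ?thesis by simp
next
  case True
  then obtain p0 where p0: "p0 \<in> pairs n j" "goodp n x (fst p0) (snd p0)" by auto
  have other: "hg n 1 p x = 0" if "p \<in> pairs n j - {p0}" for p
  proof -
    have "\<not> goodp n x (fst p) (snd p)"
    proof
      assume g: "goodp n x (fst p) (snd p)"
      have "card (snd p) = card (snd p0)" using that p0(1) unfolding pairs_def by auto
      then have "fst p = fst p0 \<and> snd p = snd p0" using goodp_unique[OF g p0(2)] by simp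
      then show False using that by (simp add: prod_eq_iff)
    qed
    moreover have "p \<in> pairs n j" using that by simp
    ultimately show ?thesis using hg_val[of p n j x] by simp
  qed
  have "(\<Sum>p\<in>pairs n j. hg n 1 p x) = hg n 1 p0 x + (\<Sum>p\<in>pairs n j - {p0}. hg n 1 p x)"
    by (rule sum.remove[OF finite_pairs p0(1)])
  also have "(\<Sum>p\<in>pairs n j - {p0}. hg n 1 p x) = 0" using other by simp
  also have "hg n 1 p0 x = 1" using hg_val[OF p0(1)] p0(2) by simp
  finally show ?thesis by simp
qed

lemma gauss_prob: "prob_space (gauss_sample n \<mu>)"
proof -
  interpret product_prob_space "\<lambda>_. NN \<mu>" "{..<n}"
    unfolding product_prob_space_def product_prob_space_axioms_def product_sigma_finite_def
    using NN_prob prob_space_imp_sigma_finite by blast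
  show ?thesis unfolding gauss_sample_def by (rule prob_space_PiM) (simp add: NN_prob)
qed

lemma os_meas_g: "j < n \<Longrightarrow> (\<lambda>x. os n x j) \<in> borel_measurable (gauss_sample n \<mu>)"
  by (rule os_measurable) (rule gauss_comp_meas)

lemma spacing:
  assumes jn: "j + 2 * k < n" and t: "0 \<le> t" "t \<le> 16"
  shows "emeasure (gauss_sample n \<mu>) {x \<in> space (gauss_sample n \<mu>). \<mu> - 8 \<le> os n x j \<and> os n x j \<le> \<mu> + 8 \<and> os n x j + t < os n x (j + 2 * k)}
     \<le> ennreal (4^k * exp (- (d0 * t / 2)) ^ (n - 1 - j))"
proof -
  define M where "M = gauss_sample n \<mu>"
  define eps where "eps = 4^k * exp (- (d0 * t / 2)) ^ (n - 1 - j)"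
  have eps0: "0 \<le> eps" unfolding eps_def by simp
  define B where "B = {x \<in> space M. \<mu> - 8 \<le> os n x j \<and> os n x j \<le> \<mu> + 8 \<and> os n x j + t < os n x (j + 2 * k)}"
  have [measurable]: "(\<lambda>x. os n x j) \<in> borel_measurable M" "(\<lambda>x. os n x (j + 2 * k)) \<in> borel_measurable M"
    unfolding M_def using jn by (auto intro!: os_meas_g)
  have Bm: "B \<in> sets M" unfolding B_def by measurable
  have "emeasure M B = (\<integral>\<^sup>+x. indicator B x \<partial>M)" using Bm by simp
  also have "\<dots> \<le> (\<integral>\<^sup>+x. (\<Sum>p\<in>pairs n j. hb n \<mu> k t p x) \<partial>M)"
  proof (intro nn_integral_mono)
    fix x assume "x \<in> space M"
    show "indicator B x \<le> (\<Sum>p\<in>pairs n j. hb n \<mu> k t p x)"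
    proof (cases "x \<in> B")
      case True
      then show ?thesis unfolding B_def using hb_ge1[OF jn t(1)] by auto
    qed simp
  qed
  also have "\<dots> = (\<Sum>p\<in>pairs n j. \<integral>\<^sup>+x. hb n \<mu> k t p x \<partial>M)"
    unfolding M_def by (intro nn_integral_sum hb_meas finite_pairs) 
  also have "\<dots> \<le> (\<Sum>p\<in>pairs n j. \<integral>\<^sup>+x. hg n (ennreal eps) p x \<partial>M)"
    unfolding M_def eps_def by (intro sum_mono hb_int t)
  also have "\<dots> = (\<Sum>p\<in>pairs n j. ennreal eps * \<integral>\<^sup>+x. hg n 1 p x \<partial>M)"
  proof (intro sum.cong refl)
    fix p assume p: "p \<in> pairs n j"
    have "(\<integral>\<^sup>+x. hg n (ennreal eps) p x \<partial>M) = (\<integral>\<^sup>+x. ennreal eps * hg n 1 p x \<partial>M)"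
      unfolding hg_def by (simp add: mult.assoc)
    also have "\<dots> = ennreal eps * \<integral>\<^sup>+x. hg n 1 p x \<partial>M"
      unfolding M_def by (intro nn_integral_cmult hg_meas[OF p])
    finally show "(\<integral>\<^sup>+x. hg n (ennreal eps) p x \<partial>M) = ennreal eps * \<integral>\<^sup>+x. hg n 1 p x \<partial>M" .
  qed
  also have "\<dots> = ennreal eps * (\<Sum>p\<in>pairs n j. \<integral>\<^sup>+x. hg n 1 p x \<partial>M)"
    by (simp add: sum_distrib_left)
  also have "\<dots> \<le> ennreal eps * 1"
  proof (intro mult_left_mono)
    have "(\<Sum>p\<in>pairs n j. \<integral>\<^sup>+x. hg n 1 p x \<partial>M) = (\<integral>\<^sup>+x. (\<Sum>p\<in>pairs n j. hg n 1 p x) \<partial>M)"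
      unfolding M_def by (intro nn_integral_sum[symmetric] hg_meas finite_pairs)
    also have "\<dots> \<le> (\<integral>\<^sup>+x. 1 \<partial>M)" by (intro nn_integral_mono sum_hg_le1)
    also have "\<dots> = 1" unfolding M_def using prob_space.emeasure_space_1[OF gauss_prob] by simp
    finally show "(\<Sum>p\<in>pairs n j. \<integral>\<^sup>+x. hg n 1 p x \<partial>M) \<le> 1" .
  qed simp
  finally show ?thesis unfolding M_def B_def eps_def by simp
qed

definition Cst :: real where "Cst = 12 / d0"

lemma d0_le1: "d0 \<le> 1"
proof -
  have "exp (-288::real) \<le> 1" by simp
  moreover have "1 \<le> sqrt (2 * pi)" using pi_gt3 by simp
  ultimately have "exp (-288::real) \<le> sqrt (2 * pi)" by linarith
  then show ?thesis unfolding d0_def by (simp add: divide_le_eq_1)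
qed

lemma Cst_ge: "Cst \<ge> 12" unfolding Cst_def using d0_pos d0_le1 by (simp add: le_divide_eq)

lemma tail_sets:
  "measure (NN \<mu>) {..<\<mu> - 8} \<le> 1/64" "measure (NN \<mu>) {\<mu> + 8<..} \<le> 1/64"
proof -
  interpret prob_space "NN \<mu>" by (rule NN_prob)
  have "{..<\<mu> - 8} \<subseteq> {v. 8 \<le> \<bar>v - \<mu>\<bar>}" by auto
  then have "measure (NN \<mu>) {..<\<mu> - 8} \<le> measure (NN \<mu>) {v. 8 \<le> \<bar>v - \<mu>\<bar>}"
    by (intro finite_measure_mono) auto
  then show "measure (NN \<mu>) {..<\<mu> - 8} \<le> 1/64" using NN_tail[of \<mu>] by simp
  have "{\<mu> + 8<..} \<subseteq> {v. 8 \<le> \<bar>v - \<mu>\<bar>}" by auto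
  then have "measure (NN \<mu>) {\<mu> + 8<..} \<le> measure (NN \<mu>) {v. 8 \<le> \<bar>v - \<mu>\<bar>}"
    by (intro finite_measure_mono) auto
  then show "measure (NN \<mu>) {\<mu> + 8<..} \<le> 1/64" using NN_tail[of \<mu>] by simp
qed

lemma card_compl_lt: "card {l. l < n \<and> P l} + card {l. l < n \<and> \<not> P l} = n"
proof -
  have "{l. l < n \<and> P l} \<union> {l. l < n \<and> \<not> P l} = {..<n}" by auto
  moreover have "{l. l < n \<and> P l} \<inter> {l. l < n \<and> \<not> P l} = {}" by auto
  ultimately show ?thesis using card_Un_disjoint[of "{l. l < n \<and> P l}" "{l. l < n \<and> \<not> P l}"] by simp
qed


lemma eps_bound:
  fixes n k R :: nat and \<eta> \<beta> :: real
  assumes kn: "real k \<le> \<eta> * real n" and n3: "3 \<le> n" and nR: "real n \<le> 3 * real R"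
    and \<beta>: "0 < \<beta>" "\<beta> < 1/2" and \<eta>: "0 \<le> \<eta>"
  shows "4^k * exp (- (d0 * (Cst * (\<eta> + ln (1/\<beta>) / real n)) / 2)) ^ R \<le> \<beta>"
proof -
  define L where "L = ln (1/\<beta>)"
  have "1 \<le> 1 / \<beta>" using \<beta> by simp
  then have L0: "0 \<le> L" unfolding L_def by (rule ln_ge_zero)
  have npos: "0 < real n" using n3 by simp
  have dC: "d0 * Cst = 12" unfolding Cst_def using d0_pos by simp
  have "d0 * (Cst * (\<eta> + L / real n)) / 2 = 6 * (\<eta> + L / real n)"
    using dC by (simp add: algebra_simps)
  then have e: "exp (- (d0 * (Cst * (\<eta> + L / real n)) / 2)) ^ R = exp (- (real R * (6 * (\<eta> + L / real n))))"
    by (simp add: exp_of_nat_mult[symmetric])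
  have "real n * (2 * (\<eta> + L / real n)) \<le> 3 * real R * (2 * (\<eta> + L / real n))"
    using nR \<eta> L0 npos by (intro mult_right_mono) auto
  then have "2 * (\<eta> * real n) + 2 * L \<le> real R * (6 * (\<eta> + L / real n))"
    using npos by (simp add: algebra_simps)
  then have big: "2 * real k + 2 * L \<le> real R * (6 * (\<eta> + L / real n))" using kn by linarith
  have "(4::real)^k \<le> exp 2 ^ k"
  proof (intro power_mono)
    have "2 \<le> exp (1::real)" using exp_ge_add_one_self[of 1] by simp
    then have "2 * 2 \<le> exp (1::real) * exp 1" by (intro mult_mono) auto
    then show "(4::real) \<le> exp 2" by (simp add: exp_add[symmetric])
  qed auto
  also have "\<dots> = exp (2 * real k)" by (simp add: exp_of_nat_mult[symmetric] mult.commute)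
  finally have f: "(4::real)^k \<le> exp (2 * real k)" .
  have "4^k * exp (- (real R * (6 * (\<eta> + L / real n)))) \<le> exp (2 * real k) * exp (- (2 * real k + 2 * L))"
    using f big by (intro mult_mono) auto
  also have "\<dots> = exp (- (2 * L))" by (simp add: exp_add[symmetric])
  also have "\<dots> \<le> exp (- L)" using L0 by simp
  also have "\<dots> = \<beta>" unfolding L_def using \<beta> by (simp add: ln_div)
  finally show ?thesis unfolding L_def[symmetric] e .
qed

lemma le4: fixes a b c d :: ennreal
  assumes "1 \<le> a \<or> 1 \<le> b \<or> 1 \<le> c \<or> 1 \<le> d" shows "1 \<le> a + b + c + d"
proof -
  have "a \<le> a + b + c + d" "b \<le> a + b + c + d" "c \<le> a + b + c + d" "d \<le> a + b + c + d"
    by (simp_all add: le_iff_add ac_simps)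
  then show ?thesis using assms order_trans by blast
qed

lemma main_bound:
  fixes m :: nat and \<mu> \<eta> \<beta> :: real
  assumes m: "m \<ge> 1" and \<eta>: "0 < \<eta>" "\<eta> < 1/3" and \<beta>: "0 < \<beta>" "\<beta> < 1/2"
    and n: "n = 2 * m - 1"
  shows "measure (gauss_sample n \<mu>) {x \<in> space (gauss_sample n \<mu>). S_med n \<eta> x \<le> Cst * (\<eta> + ln (1 / \<beta>) / real n)}
     \<ge> 1 - \<beta> - 3 * (127/128)^n"
proof -
  define M where "M = gauss_sample n \<mu>"
  define k where "k = nat \<lfloor>\<eta> * real n\<rfloor>"
  define p where "p = m - 1"
  define T where "T = Cst * (\<eta> + ln (1 / \<beta>) / real n)"
  define G where "G = {x \<in> space M. S_med n \<eta> x \<le> T}"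
  interpret P: prob_space M unfolding M_def by (rule gauss_prob)
  have rn: "real n = 2 * real m - 1" using m n by simp
  have "real m \<ge> 1" using m by simp
  then have npos: "0 < real n" using rn by linarith
  have kle: "real k \<le> \<eta> * real n" unfolding k_def using \<eta> npos by simp
  have "(3 * \<eta>) * real n < 1 * real n" by (rule mult_strict_right_mono) (use \<eta> npos in auto)
  then have k3: "3 * real k < real n" using kle by linarith
  have km: "k < m" using k3 rn by simp
  have L0: "0 \<le> ln (1 / \<beta>)" using \<beta> by (intro ln_ge_zero) simp
  have T0: "0 < T" unfolding T_def using Cst_ge \<eta> L0 npos by (intro mult_pos_pos add_pos_nonneg) auto
  have kp: "k \<le> p" "p + k < n" using km m n unfolding p_def by auto
  have form: "S_med n \<eta> x = max (os n x (p + k) - os n x p) (os n x p - os n x (p - k))" for x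
    unfolding p_def k_def using S_med_formula[OF n m km[unfolded k_def]] by simp
  have [measurable]: "(\<lambda>x. os n x i) \<in> borel_measurable M" if "i < n" for i
    unfolding M_def using that by (rule os_meas_g)
  have [measurable]: "(\<lambda>x. os n x p) \<in> borel_measurable M" "(\<lambda>x. os n x (p - k)) \<in> borel_measurable M"
    "(\<lambda>x. os n x (p + k)) \<in> borel_measurable M" using kp by (auto intro!: os_meas_g simp: M_def)
  have Gm: "G \<in> sets M" unfolding G_def form by measurable
  have mG: "measure M G = 1 - measure M (space M - G)" using P.prob_compl[OF Gm] by simp
  show ?thesis
  proof (cases "k = 0")
    case True
    then have "G = space M" unfolding G_def form using T0 by auto
    then have mg1: "measure M G = 1" using P.prob_space by simp
    have "0 \<le> (127/128::real)^n" by simp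
    then show ?thesis unfolding M_def[symmetric] T_def[symmetric] G_def[symmetric] using \<beta> mg1 by linarith
  next
    case False
    define j where "j = p - k"
    have jk: "j + 2 * k = p + k" "j + 2 * k < n" unfolding j_def using kp by auto
    have n3: "3 \<le> n" using k3 False by linarith
    define R where "R = n - 1 - j"
    have nR: "real n \<le> 3 * real R" unfolding R_def j_def p_def using n m km False by simp
    define f1 where "f1 = tailf n {..<\<mu> - 8} (m - k)"
    define f2 where "f2 = tailf n {\<mu> + 8<..} m"
    define f3 where "f3 = tailf n {\<mu> + 8<..} (m - k)"
    define B4 where "B4 = (if T \<le> 16 then {x \<in> space M. \<mu> - 8 \<le> os n x j \<and> os n x j \<le> \<mu> + 8 \<and> os n x j + T < os n x (j + 2 * k)} else {})"
    have [measurable]: "(\<lambda>x. os n x j) \<in> borel_measurable M" "(\<lambda>x. os n x (j + 2 * k)) \<in> borel_measurable M"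
      using jk by (auto intro!: os_meas_g simp: M_def)
    have "{x \<in> space M. \<mu> - 8 \<le> os n x j \<and> os n x j \<le> \<mu> + 8 \<and> os n x j + T < os n x (j + 2 * k)} \<in> sets M"
      by measurable
    then have B4m: "B4 \<in> sets M" unfolding B4_def by simp
    have r1: "n \<le> 6 * (m - k)" using k3 rn km by linarith
    have r2: "n \<le> 6 * m" using n by simp
    have pt: "indicator (space M - G) x \<le> f1 x + f2 x + f3 x + indicator B4 x" if x: "x \<in> space M" for x
    proof (cases "x \<in> G")
      case True then show ?thesis by simp
    next
      case False
      then have ST: "T < S_med n \<eta> x" using x unfolding G_def by auto
      have o1: "os n x (p - k) \<le> os n x p" "os n x p \<le> os n x (p + k)" using kp by (auto intro: os_mono)
      have q1: "os n x (j + 2 * k) = os n x (p + k)" by (simp only: jk(1))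
      have q2: "os n x j = os n x (p - k)" by (simp add: j_def)
      have sp: "T < os n x (j + 2 * k) - os n x j" using ST o1 unfolding form q1 q2 by linarith
      have "1 \<le> f1 x + f2 x + f3 x + indicator B4 x"
      proof (cases "os n x j < \<mu> - 8")
        case True
        then have "j < clt n x (\<mu> - 8)" using os_lt_iff[of j n x "\<mu> - 8"] jk(2) by simp
        then have "m - k \<le> card {l. l < n \<and> x l \<in> {..<\<mu> - 8}}" unfolding clt_def j_def p_def using km m by simp
        then have "1 \<le> f1 x" unfolding f1_def by (rule tailf_ge)
        then show ?thesis by (intro le4) simp
      next
        case c1: False
        show ?thesis
        proof (cases "\<mu> + 8 < os n x j")
          case True
          then have "\<not> j < cle n x (\<mu> + 8)" using os_le_iff[of j n x "\<mu> + 8"] jk(2) by simp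
          then have "card {l. l < n \<and> x l \<le> \<mu> + 8} \<le> j" unfolding cle_def by simp
          moreover have "card {l. l < n \<and> x l \<le> \<mu> + 8} + card {l. l < n \<and> \<not> x l \<le> \<mu> + 8} = n"
            by (rule card_compl_lt)
          moreover have "{l. l < n \<and> \<not> x l \<le> \<mu> + 8} = {l. l < n \<and> x l \<in> {\<mu> + 8<..}}" by auto
          ultimately have "m \<le> card {l. l < n \<and> x l \<in> {\<mu> + 8<..}}" unfolding j_def p_def using n km m by auto
          then have "1 \<le> f2 x" unfolding f2_def by (rule tailf_ge)
          then show ?thesis by (intro le4) simp
        next
          case c2: False
          show ?thesis
          proof (cases "\<mu> + 8 < os n x (j + 2 * k)")
            case True
            then have "\<not> j + 2 * k < cle n x (\<mu> + 8)" using os_le_iff[of "j + 2 * k" n x "\<mu> + 8"] jk(2) by simp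
            then have "card {l. l < n \<and> x l \<le> \<mu> + 8} \<le> j + 2 * k" unfolding cle_def by simp
            moreover have "card {l. l < n \<and> x l \<le> \<mu> + 8} + card {l. l < n \<and> \<not> x l \<le> \<mu> + 8} = n"
              by (rule card_compl_lt)
            moreover have "{l. l < n \<and> \<not> x l \<le> \<mu> + 8} = {l. l < n \<and> x l \<in> {\<mu> + 8<..}}" by auto
            ultimately have "m - k \<le> card {l. l < n \<and> x l \<in> {\<mu> + 8<..}}" unfolding j_def p_def using n km m by auto
            then have "1 \<le> f3 x" unfolding f3_def by (rule tailf_ge)
            then show ?thesis by (intro le4) simp
          next
            case c3: False
            have "T \<le> 16" using sp c1 c2 c3 by linarith
            then have "x \<in> B4" unfolding B4_def using x c1 c2 sp by auto
            then show ?thesis by (intro le4) simp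
          qed
        qed
      qed
      then show ?thesis using False x by simp
    qed
    have m1: "f1 \<in> borel_measurable M" "f2 \<in> borel_measurable M" "f3 \<in> borel_measurable M"
      unfolding f1_def f2_def f3_def M_def by (auto intro!: tailf_meas)
    have "emeasure M (space M - G) = (\<integral>\<^sup>+x. indicator (space M - G) x \<partial>M)" using Gm by simp
    also have "\<dots> \<le> (\<integral>\<^sup>+x. f1 x + f2 x + f3 x + indicator B4 x \<partial>M)"
      by (intro nn_integral_mono pt)
    also have "\<dots> = (\<integral>\<^sup>+x. f1 x \<partial>M) + (\<integral>\<^sup>+x. f2 x \<partial>M) + (\<integral>\<^sup>+x. f3 x \<partial>M) + emeasure M B4"
    proof -
      have i1: "(\<integral>\<^sup>+x. f1 x + f2 x + f3 x + indicator B4 x \<partial>M) = (\<integral>\<^sup>+x. f1 x + f2 x + f3 x \<partial>M) + (\<integral>\<^sup>+x. indicator B4 x \<partial>M)"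
        by (rule nn_integral_add) (use m1 B4m in auto)
      have i2: "(\<integral>\<^sup>+x. f1 x + f2 x + f3 x \<partial>M) = (\<integral>\<^sup>+x. f1 x + f2 x \<partial>M) + (\<integral>\<^sup>+x. f3 x \<partial>M)"
        by (rule nn_integral_add) (use m1 in auto)
      have i3: "(\<integral>\<^sup>+x. f1 x + f2 x \<partial>M) = (\<integral>\<^sup>+x. f1 x \<partial>M) + (\<integral>\<^sup>+x. f2 x \<partial>M)"
        by (rule nn_integral_add) (use m1 in auto)
      have i4: "(\<integral>\<^sup>+x. indicator B4 x \<partial>M) = emeasure M B4" by (rule nn_integral_indicator[OF B4m])
      show ?thesis unfolding i1 i2 i3 i4 ..
    qed
    also have "\<dots> \<le> ennreal ((127/128)^n) + ennreal ((127/128)^n) + ennreal ((127/128)^n) + ennreal \<beta>"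
    proof (intro add_mono)
      show "(\<integral>\<^sup>+x. f1 x \<partial>M) \<le> ennreal ((127/128)^n)" unfolding f1_def M_def
        using tail_sets r1 by (intro tailf_int) auto
      show "(\<integral>\<^sup>+x. f2 x \<partial>M) \<le> ennreal ((127/128)^n)" unfolding f2_def M_def
        using tail_sets r2 by (intro tailf_int) auto
      show "(\<integral>\<^sup>+x. f3 x \<partial>M) \<le> ennreal ((127/128)^n)" unfolding f3_def M_def
        using tail_sets r1 by (intro tailf_int) auto
      show "emeasure M B4 \<le> ennreal \<beta>"
      proof (cases "T \<le> 16")
        case True
        have "emeasure M B4 \<le> ennreal (4^k * exp (- (d0 * T / 2)) ^ (n - 1 - j))"
          unfolding B4_def M_def using True T0 spacing[OF jk(2), of T \<mu>] by simp
        also have "\<dots> \<le> ennreal \<beta>" unfolding T_def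
          using eps_bound[OF kle n3 nR[unfolded R_def] \<beta>] \<eta> by (intro ennreal_leI) auto
        finally show ?thesis .
      qed (simp add: B4_def)
    qed
    also have "\<dots> = ennreal ((127/128)^n + (127/128)^n + (127/128)^n + \<beta>)"
    proof -
      have z: "0 \<le> (127/128::real)^n" "0 \<le> \<beta>" using \<beta> by auto
      have z2: "0 \<le> (127/128::real)^n + (127/128)^n" "0 \<le> (127/128::real)^n + (127/128)^n + (127/128)^n" by auto
      show ?thesis by (simp only: ennreal_plus[OF z2(2) z(2)] ennreal_plus[OF z2(1) z(1)] ennreal_plus[OF z(1) z(1)])
    qed
    finally have "ennreal (measure M (space M - G)) \<le> ennreal ((127/128)^n + (127/128)^n + (127/128)^n + \<beta>)"
      by (simp only: P.emeasure_eq_measure)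
    then have "measure M (space M - G) \<le> (127/128)^n + (127/128)^n + (127/128)^n + \<beta>"
      using \<beta> by (subst (asm) ennreal_le_iff) auto
    then have "measure M (space M - G) \<le> 3 * (127/128)^n + \<beta>" by simp
    then show ?thesis unfolding M_def[symmetric] T_def[symmetric] G_def[symmetric] mG by simp
  qed
qed

theorem theoremB3:
  "\<exists>c C :: real. c > 0 \<and> C > 0 \<and>
     (\<forall>(m::nat) (\<mu>::real) (\<eta>::real) (\<beta>::real).
        m \<ge> 1 \<longrightarrow> 0 < \<eta> \<longrightarrow> \<eta> < 1/3 \<longrightarrow> 0 < \<beta> \<longrightarrow> \<beta> < 1/2 \<longrightarrow>
        (let n = 2 * m - 1 in
          measure (gauss_sample n \<mu>)
            {x \<in> space (gauss_sample n \<mu>).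
               S_med n \<eta> x \<le> C * (\<eta> + ln (1 / \<beta>) / real n)}
          \<ge> 1 - \<beta> - C * exp (- c * real n)))"
proof (intro exI conjI allI impI)
  show "0 < ln (128/127::real)" by simp
  show "0 < Cst" using Cst_ge by simp
  fix m :: nat and \<mu> \<eta> \<beta> :: real
  assume a: "1 \<le> m" "0 < \<eta>" "\<eta> < 1/3" "0 < \<beta>" "\<beta> < 1/2"
  define n where "n = 2 * m - 1"
  have e: "exp (- ln (128/127) * real n) = (127/128::real)^n"
  proof -
    have "exp (- ln (128/127) * real n) = exp (- ln (128/127::real)) ^ n"
      by (simp add: exp_of_nat_mult[symmetric] mult.commute)
    also have "exp (- ln (128/127::real)) = 127/128" by (simp add: exp_minus)
    finally show ?thesis .
  qed
  have "3 * (127/128::real)^n \<le> Cst * (127/128)^n" using Cst_ge by (intro mult_right_mono) auto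
  then have "1 - \<beta> - Cst * exp (- ln (128/127) * real n) \<le> 1 - \<beta> - 3 * (127/128)^n" unfolding e by simp
  also have "\<dots> \<le> measure (gauss_sample n \<mu>) {x \<in> space (gauss_sample n \<mu>). S_med n \<eta> x \<le> Cst * (\<eta> + ln (1 / \<beta>) / real n)}"
    using main_bound[OF a n_def] .
  finally show "let n = 2 * m - 1 in
          measure (gauss_sample n \<mu>)
            {x \<in> space (gauss_sample n \<mu>).
               S_med n \<eta> x \<le> Cst * (\<eta> + ln (1 / \<beta>) / real n)}
          \<ge> 1 - \<beta> - Cst * exp (- ln (128/127) * real n)" unfolding n_def Let_def .
qed

end
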